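(* Let $n\ge1$ and, for $i=1,\dots,n$, let $c_i>0$, $m_i>0$, $d_i>0$, and let $a_i,\mu_i,b_i,\delta_i$ satisfy $0\le a_i<\mu_i<b_i$ and $0<\delta_i\le \frac{2(b_i-\mu_i)(\mu_i-a_i)}{b_i-a_i}$. Let $\mathcal{P}_{(\mu,\delta)}$ be the set of probability distributions $\mathbb{P}$ of random vectors $\vec D=(D_1,\dots,D_n)$ such that, for every $i$, $\mathbb{E}_{\mathbb{P}}[D_i]=\mu_i$, $\mathbb{E}_{\mathbb{P}}|D_i-\mu_i|=\delta_i$ and $\operatorname{supp}(D_i)\subseteq[a_i,b_i]$. For $\vec q=(q_1,\dots,q_n)$ let $$G(\vec q,\vec D)=\sum_{i=1}^n c_i\big(d_i(q_i-D_i)+(m_i+d_i)(D_i-q_i)^+\big).$$ Then, for every $\vec q$, the maximum $\max_{\mathbb{P}\in\mathcal{P}_{(\mu,\delta)}}\mathbb{E}_{\mathbb{P}}[G(\vec q,\vec D)]$ is attained by a distribution under which each $D_i$ has the three-point distribution with values $a_i,\mu_i,b_i$ and respective probabilities $$p_1^{(i)}=\frac{\delta_i}{2(\mu_i-a_i)},\quad p_2^{(i)}=1-\frac{\delta_i}{2(\mu_i-a_i)}-\frac{\delta_i}{2(b_i-\mu_i)},\quad p_3^{(i)}=\frac{\delta_i}{2(b_i-\mu_i)}.$$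
   Context: Here $x^+=\max(x,0)$. The parameters $c_i$, $m_i$ and $d_i$ are the purchase cost, mark-up and discount factor of item $i$, so its selling price is $c_i(1+m_i)$ and its salvage value is $c_i(1-d_i)$. *)

theory Defs
  imports "HOL-Probability.Probability"
begin

definition ambig_set ::
  "('n::finite \<Rightarrow> real) \<Rightarrow> ('n \<Rightarrow> real) \<Rightarrow> ('n \<Rightarrow> real) \<Rightarrow> ('n \<Rightarrow> real)
     \<Rightarrow> (real ^ 'n) measure set" where
  "ambig_set a mu b delta =
     {P. prob_space P \<and> sets P = sets borel \<and>
        (\<forall>i. integrable P (\<lambda>x. x $ i) \<and> (\<integral>x. x $ i \<partial>P) = mu i \<and>
             integrable P (\<lambda>x. \<bar>x $ i - mu i\<bar>) \<and> (\<integral>x. \<bar>x $ i - mu i\<bar> \<partial>P) = delta i \<and>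
             (AE x in P. a i \<le> x $ i \<and> x $ i \<le> b i))}"

definition Gcost ::
  "('n::finite \<Rightarrow> real) \<Rightarrow> ('n \<Rightarrow> real) \<Rightarrow> ('n \<Rightarrow> real) \<Rightarrow> real ^ 'n \<Rightarrow> real ^ 'n \<Rightarrow> real" where
  "Gcost c m d q D =
     (\<Sum>i\<in>UNIV. c i * (d i * (q $ i - D $ i) + (m i + d i) * max (D $ i - q $ i) 0))"

end

theory Submission
  imports Defs
begin

lemma maxpos_integrable:
  fixes X :: "'a \<Rightarrow> real"
  assumes "prob_space P" "integrable P X"
  shows "integrable P (\<lambda>x. max (X x - q) 0)"
proof -
  interpret prob_space P by fact
  have "integrable P (\<lambda>x. (X x - q + \<bar>X x - q\<bar>) / 2)"
    using assms(2) by (intro integrable_divide Bochner_Integration.integrable_add integrable_abs Bochner_Integration.integrable_diff) auto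
  moreover have "(\<lambda>x. (X x - q + \<bar>X x - q\<bar>) / 2) = (\<lambda>x. max (X x - q) 0)"
    by (auto simp: max_def)
  ultimately show ?thesis by simp
qed

lemma pointwise:
  fixes a mu b q t :: real
  assumes "a < mu" "mu < b" "a \<le> t" "t \<le> b"
  defines "s1 \<equiv> (max (mu - q) 0 - max (a - q) 0) / (mu - a)"
  defines "s2 \<equiv> (max (b - q) 0 - max (mu - q) 0) / (b - mu)"
  shows "max (t - q) 0 \<le> max (mu - q) 0 + (s1 + s2) / 2 * (t - mu) + (s2 - s1) / 2 * \<bar>t - mu\<bar>"
proof (cases "t \<le> mu")
  case True
  have r: "max (mu - q) 0 + (s1 + s2) / 2 * (t - mu) + (s2 - s1) / 2 * \<bar>t - mu\<bar>
        = max (mu - q) 0 + s1 * (t - mu)" using True by (simp add: field_simps)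
  have h1: "(t - a) * max (mu - q) 0 \<ge> (t - a) * (mu - q)" using assms by (intro mult_left_mono) auto
  have h2: "(mu - t) * max (a - q) 0 \<ge> (mu - t) * (a - q)" using assms True by (intro mult_left_mono) auto
  have h3: "(t - a) * max (mu - q) 0 \<ge> 0" "(mu - t) * max (a - q) 0 \<ge> 0" using assms True by auto
  have "(mu - a) * max (t - q) 0 \<le> (t - a) * max (mu - q) 0 + (mu - t) * max (a - q) 0"
  proof (cases "t - q \<ge> 0")
    case True then show ?thesis using h1 h2 h3 by (simp add: algebra_simps)
  next
    case False then show ?thesis using h3 by simp
  qed
  also have "\<dots> = (mu - a) * (max (mu - q) 0 + s1 * (t - mu))"
    using assms by (simp add: s1_def field_simps)
  finally have "(mu - a) * max (t - q) 0 \<le> (mu - a) * (max (mu - q) 0 + s1 * (t - mu))" .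
  then have "max (t - q) 0 \<le> max (mu - q) 0 + s1 * (t - mu)"
    using assms by (simp add: mult_le_cancel_left)
  then show ?thesis using r by simp
next
  case False
  have r: "max (mu - q) 0 + (s1 + s2) / 2 * (t - mu) + (s2 - s1) / 2 * \<bar>t - mu\<bar>
        = max (mu - q) 0 + s2 * (t - mu)" using False by (simp add: field_simps)
  have h1: "(b - t) * max (mu - q) 0 \<ge> (b - t) * (mu - q)" using assms by (intro mult_left_mono) auto
  have h2: "(t - mu) * max (b - q) 0 \<ge> (t - mu) * (b - q)" using assms False by (intro mult_left_mono) auto
  have h3: "(b - t) * max (mu - q) 0 \<ge> 0" "(t - mu) * max (b - q) 0 \<ge> 0" using assms False by auto
  have "(b - mu) * max (t - q) 0 \<le> (b - t) * max (mu - q) 0 + (t - mu) * max (b - q) 0"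
  proof (cases "t - q \<ge> 0")
    case True then show ?thesis using h1 h2 h3 by (simp add: algebra_simps)
  next
    case False then show ?thesis using h3 by simp
  qed
  also have "\<dots> = (b - mu) * (max (mu - q) 0 + s2 * (t - mu))"
    using assms by (simp add: s2_def field_simps)
  finally have "(b - mu) * max (t - q) 0 \<le> (b - mu) * (max (mu - q) 0 + s2 * (t - mu))" .
  then have "max (t - q) 0 \<le> max (mu - q) 0 + s2 * (t - mu)"
    using assms by (simp add: mult_le_cancel_left)
  then show ?thesis using r by simp
qed

lemma alg0:
  fixes a mu b delta fa fm fb u v :: real
  shows "fm + ((fb - fm) * u - (fm - fa) * v) / 2 * delta
    = delta * v / 2 * fa + (1 - delta * v / 2 - delta * u / 2) * fm
      + delta * u / 2 * fb"
  by (simp add: field_simps)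
lemma divtwo: "(d::real) / (2 * x) = d * inverse x / 2"
  by (cases "x = 0") (simp_all add: field_simps)
lemma alg:
  fixes a mu b delta fa fm fb :: real
  shows "fm + ((fb - fm) / (b - mu) - (fm - fa) / (mu - a)) / 2 * delta
    = delta / (2 * (mu - a)) * fa + (1 - delta / (2 * (mu - a)) - delta / (2 * (b - mu))) * fm
      + delta / (2 * (b - mu)) * fb"
  unfolding divtwo divide_inverse[of "fb - fm"] divide_inverse[of "fm - fa"] by (rule alg0)

lemma key:
  fixes P :: "'a measure" and X :: "'a \<Rightarrow> real"
  assumes "prob_space P" "integrable P X" "(\<integral>x. X x \<partial>P) = mu"
    "integrable P (\<lambda>x. \<bar>X x - mu\<bar>)" "(\<integral>x. \<bar>X x - mu\<bar> \<partial>P) = delta"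
    "AE x in P. a \<le> X x \<and> X x \<le> b" "a < mu" "mu < b"
  shows "(\<integral>x. max (X x - q) 0 \<partial>P) \<le> delta / (2 * (mu - a)) * max (a - q) 0
     + (1 - delta / (2 * (mu - a)) - delta / (2 * (b - mu))) * max (mu - q) 0
     + delta / (2 * (b - mu)) * max (b - q) 0"
proof -
  interpret prob_space P by fact
  define s1 where "s1 = (max (mu - q) 0 - max (a - q) 0) / (mu - a)"
  define s2 where "s2 = (max (b - q) 0 - max (mu - q) 0) / (b - mu)"
  have i1: "integrable P (\<lambda>x. (s1 + s2) / 2 * (X x - mu))"
    using assms by (intro integrable_mult_right Bochner_Integration.integrable_diff) auto
  have i2: "integrable P (\<lambda>x. (s2 - s1) / 2 * \<bar>X x - mu\<bar>)"
    using assms by (intro integrable_mult_right) auto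
  have "(\<integral>x. max (X x - q) 0 \<partial>P) \<le>
        (\<integral>x. max (mu - q) 0 + (s1 + s2) / 2 * (X x - mu) + (s2 - s1) / 2 * \<bar>X x - mu\<bar> \<partial>P)"
    apply (rule integral_mono_AE)
      apply (rule maxpos_integrable[OF assms(1,2)])
     apply (rule Bochner_Integration.integrable_add[OF Bochner_Integration.integrable_add[OF _ i1] i2], simp)
    using assms(6) apply eventually_elim
    unfolding s1_def s2_def by (rule pointwise[OF assms(7,8)]) auto
  also have "\<dots> = max (mu - q) 0 + (\<integral>x. (s1 + s2) / 2 * (X x - mu) \<partial>P)
       + (\<integral>x. (s2 - s1) / 2 * \<bar>X x - mu\<bar> \<partial>P)"
    using i1 i2 by (simp add: Bochner_Integration.integral_add prob_space)
  also have "(\<integral>x. (s1 + s2) / 2 * (X x - mu) \<partial>P) = 0"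
  proof -
    have "(\<integral>x. X x - mu \<partial>P) = 0"
      using assms(2,3) by (simp add: Bochner_Integration.integral_diff prob_space)
    then show ?thesis by simp
  qed
  also have "(\<integral>x. (s2 - s1) / 2 * \<bar>X x - mu\<bar> \<partial>P) = (s2 - s1) / 2 * delta"
    using assms(5) by simp
  also have "max (mu - q) 0 + 0 + (s2 - s1) / 2 * delta = delta / (2 * (mu - a)) * max (a - q) 0
     + (1 - delta / (2 * (mu - a)) - delta / (2 * (b - mu))) * max (mu - q) 0
     + delta / (2 * (b - mu)) * max (b - q) 0"
    unfolding s1_def s2_def add_0_right
    by (rule alg)
  finally show ?thesis .
qed

lemma Gcost_integral:
  fixes P :: "(real ^ 'n::finite) measure"
  assumes "prob_space P" "\<And>i. integrable P (\<lambda>x. x $ i)"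
  shows "integrable P (Gcost c m d q)"
    "(\<integral>x. Gcost c m d q x \<partial>P) = (\<Sum>i\<in>UNIV. c i * (d i * (q $ i - (\<integral>x. x $ i \<partial>P))
        + (m i + d i) * (\<integral>x. max (x $ i - q $ i) 0 \<partial>P)))"
proof -
  interpret prob_space P by fact
  have ii: "integrable P (\<lambda>x. c i * (d i * (q $ i - x $ i) + (m i + d i) * max (x $ i - q $ i) 0))" for i
    using assms(2)[of i] maxpos_integrable[OF assms(1,2), of i "q $ i"]
    by (intro integrable_mult_right Bochner_Integration.integrable_add Bochner_Integration.integrable_diff) auto
  have eq: "Gcost c m d q = (\<lambda>x. \<Sum>i\<in>UNIV. c i * (d i * (q $ i - x $ i) + (m i + d i) * max (x $ i - q $ i) 0))"
    by (rule ext) (simp add: Gcost_def)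
  show "integrable P (Gcost c m d q)" unfolding eq using ii by (rule Bochner_Integration.integrable_sum)
  have "(\<integral>x. Gcost c m d q x \<partial>P) = (\<Sum>i\<in>UNIV. (\<integral>x. c i * (d i * (q $ i - x $ i) + (m i + d i) * max (x $ i - q $ i) 0) \<partial>P))"
    unfolding eq using ii by (rule Bochner_Integration.integral_sum)
  also have "\<dots> = (\<Sum>i\<in>UNIV. c i * (d i * (q $ i - (\<integral>x. x $ i \<partial>P))
        + (m i + d i) * (\<integral>x. max (x $ i - q $ i) 0 \<partial>P)))"
  proof (rule sum.cong[OF refl])
    fix i
    have i1: "integrable P (\<lambda>x. d i * (q $ i - x $ i))"
      using assms(2)[of i] by (intro integrable_mult_right Bochner_Integration.integrable_diff) auto
    have i2: "integrable P (\<lambda>x. (m i + d i) * max (x $ i - q $ i) 0)"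
      using maxpos_integrable[OF assms(1,2), of i "q $ i"] by (intro integrable_mult_right)
    have "(\<integral>x. q $ i - x $ i \<partial>P) = q $ i - (\<integral>x. x $ i \<partial>P)"
      using assms(2)[of i] by (simp add: Bochner_Integration.integral_diff prob_space)
    then show "(\<integral>x. c i * (d i * (q $ i - x $ i) + (m i + d i) * max (x $ i - q $ i) 0) \<partial>P) =
        c i * (d i * (q $ i - (\<integral>x. x $ i \<partial>P)) + (m i + d i) * (\<integral>x. max (x $ i - q $ i) 0 \<partial>P))"
      using i1 i2 by (simp add: Bochner_Integration.integral_add)
  qed
  finally show "(\<integral>x. Gcost c m d q x \<partial>P) = (\<Sum>i\<in>UNIV. c i * (d i * (q $ i - (\<integral>x. x $ i \<partial>P))
        + (m i + d i) * (\<integral>x. max (x $ i - q $ i) 0 \<partial>P)))" .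
qed


lemma half_lem: "(X::real) \<noteq> 0 \<Longrightarrow> D / (2 * X) * X = D / 2"
  by (simp add: field_simps)

theorem lemma2:
  fixes c m d a mu b delta :: "'n::finite \<Rightarrow> real" and q :: "real ^ 'n"
  assumes "\<And>i. c i > 0" and "\<And>i. m i > 0" and "\<And>i. d i > 0"
    and "\<And>i. 0 \<le> a i" and "\<And>i. a i < mu i" and "\<And>i. mu i < b i"
    and "\<And>i. 0 < delta i"
    and "\<And>i. delta i \<le> 2 * (b i - mu i) * (mu i - a i) / (b i - a i)"
  shows "\<exists>Pstar \<in> ambig_set a mu b delta.
           (\<forall>i. measure Pstar {x. x $ i = a i} = delta i / (2 * (mu i - a i)) \<and>
                measure Pstar {x. x $ i = mu i} =
                  1 - delta i / (2 * (mu i - a i)) - delta i / (2 * (b i - mu i)) \<and>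
                measure Pstar {x. x $ i = b i} = delta i / (2 * (b i - mu i))) \<and>
           (\<forall>P \<in> ambig_set a mu b delta.
              (\<integral>x. Gcost c m d q x \<partial>P) \<le> (\<integral>x. Gcost c m d q x \<partial>Pstar))"
proof -
  define p1 where "p1 = (\<lambda>i. delta i / (2 * (mu i - a i)))"
  define p3 where "p3 = (\<lambda>i. delta i / (2 * (b i - mu i)))"
  define p2 where "p2 = (\<lambda>i. 1 - p1 i - p3 i)"
  define xs where "xs = (\<lambda>i. [(a i, p1 i), (mu i, p2 i), (b i, p3 i)])"
  define L where "L = (\<lambda>i. pmf_of_list (xs i))"
  have p13: "p1 i + p3 i \<le> 1" for i
  proof -
    have pos: "b i - a i > 0" "mu i - a i > 0" "b i - mu i > 0" using assms(5,6)[of i] by auto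
    have dle: "delta i * (b i - a i) \<le> 2 * (b i - mu i) * (mu i - a i)"
      using assms(8)[of i] pos by (simp add: pos_le_divide_eq)
    define K where "K = 2 * (b i - mu i) * (mu i - a i)"
    have Kpos: "K > 0" unfolding K_def using pos by simp
    have hh: "(D::real) / (2 * X) * (2 * Y * Z) = D * W" if "X \<noteq> 0" "Y * Z = W * X" for D X Y Z W
      using that by (simp add: field_simps)
    have e1: "p1 i * K = delta i * (b i - mu i)" unfolding p1_def K_def using pos by (intro hh) auto
    have e3: "p3 i * K = delta i * (mu i - a i)" unfolding p3_def K_def using pos by (intro hh) auto
    have "(p1 i + p3 i) * K = delta i * (b i - a i)" using e1 e3 by (simp add: algebra_simps)
    with dle have "(p1 i + p3 i) * K \<le> 1 * K" unfolding K_def by simp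
    then show ?thesis using Kpos by (simp only: mult_le_cancel_right)
  qed
  have p1pos: "p1 i \<ge> 0" and p3pos: "p3 i \<ge> 0" for i
    unfolding p1_def p3_def using assms(5,6,7)[of i] by auto
  have wf: "pmf_of_list_wf (xs i)" for i
    unfolding xs_def p2_def using p13[of i] p1pos[of i] p3pos[of i]
    by (intro pmf_of_list_wfI) auto
  have dist: "a i \<noteq> mu i" "mu i \<noteq> b i" "a i \<noteq> b i" for i
    using assms(5,6)[of i] by auto
  have pmfL: "pmf (L i) (a i) = p1 i" "pmf (L i) (mu i) = p2 i" "pmf (L i) (b i) = p3 i" for i
    unfolding L_def using wf[of i] dist[of i] by (simp_all add: pmf_pmf_of_list xs_def)
  have setL: "set_pmf (L i) \<subseteq> {a i, mu i, b i}" for i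
    unfolding L_def using set_pmf_of_list[OF wf[of i]] by (simp add: xs_def)
  have finL: "finite (set_pmf (L i))" for i using setL[of i] finite_subset by blast
  have intL: "(\<integral>t. g t \<partial>measure_pmf (L i)) = p1 i * g (a i) + p2 i * g (mu i) + p3 i * g (b i)"
    for i and g :: "real \<Rightarrow> real"
  proof -
    have "(\<integral>t. g t \<partial>measure_pmf (L i)) = (\<Sum>t\<in>{a i, mu i, b i}. g t * pmf (L i) t)"
      by (rule integral_measure_pmf_real) (use setL[of i] in auto)
    also have "\<dots> = p1 i * g (a i) + p2 i * g (mu i) + p3 i * g (b i)"
      using dist[of i] pmfL[of i] by (simp add: algebra_simps)
    finally show ?thesis .
  qed
  define Q where "Q = map_pmf vec_lambda (Pi_pmf UNIV 0 L)"
  have marg: "map_pmf (\<lambda>x. x $ i) Q = L i" for i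
  proof -
    have "map_pmf (\<lambda>x. x $ i) Q = map_pmf (\<lambda>f. f i) (Pi_pmf UNIV 0 L)"
      unfolding Q_def map_pmf_comp by simp
    also have "\<dots> = L i" by (simp add: Pi_pmf_component)
    finally show ?thesis .
  qed
  define Pstar where "Pstar = distr (measure_pmf Q) borel id"
  have meas_id: "id \<in> measurable (measure_pmf Q) borel" by simp
  have psP: "prob_space Pstar" unfolding Pstar_def
    by (rule measure_pmf.prob_space_distr[OF meas_id])
  have setsP: "sets Pstar = sets borel" unfolding Pstar_def by simp
  have intP: "(\<integral>x. g (x $ i) \<partial>Pstar) = p1 i * g (a i) + p2 i * g (mu i) + p3 i * g (b i)"
    if g: "g \<in> borel_measurable borel" for i and g :: "real \<Rightarrow> real"
  proof -
    have "(\<integral>x. g (x $ i) \<partial>Pstar) = (\<integral>x. g (x $ i) \<partial>measure_pmf Q)"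
      unfolding Pstar_def using g by (subst integral_distr) auto
    also have "\<dots> = (\<integral>t. g t \<partial>measure_pmf (map_pmf (\<lambda>x. x $ i) Q))" by simp
    also have "\<dots> = p1 i * g (a i) + p2 i * g (mu i) + p3 i * g (b i)" unfolding marg by (rule intL)
    finally show ?thesis .
  qed
  have integP: "integrable Pstar (\<lambda>x. g (x $ i))"
    if g: "g \<in> borel_measurable borel" for i and g :: "real \<Rightarrow> real"
  proof -
    have "integrable (measure_pmf (map_pmf (\<lambda>x. x $ i) Q)) g"
      unfolding marg by (rule integrable_measure_pmf_finite[OF finL])
    then have "integrable (measure_pmf Q) (\<lambda>x. g (x $ i))" by simp
    then show ?thesis unfolding Pstar_def using g by (subst integrable_distr_eq) auto
  qed
  have measP: "measure Pstar {x. x $ i = t} = pmf (L i) t" for i t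
  proof -
    have "{x::real^'n. x $ i = t} \<in> sets borel" by measurable
    then have "measure Pstar {x. x $ i = t} = measure (measure_pmf Q) {x. x $ i = t}"
      unfolding Pstar_def by (subst measure_distr) auto
    also have "\<dots> = measure (measure_pmf (map_pmf (\<lambda>x. x $ i) Q)) {t}" by (simp add: vimage_def)
    also have "\<dots> = pmf (L i) t" unfolding marg by (rule measure_pmf_single)
    finally show ?thesis .
  qed
  have AEP: "AE x in Pstar. a i \<le> x $ i \<and> x $ i \<le> b i" for i
  proof -
    have "AE x in measure_pmf Q. a i \<le> x $ i \<and> x $ i \<le> b i"
    proof (rule AE_pmfI)
      fix y assume "y \<in> set_pmf Q"
      then have "y $ i \<in> set_pmf (map_pmf (\<lambda>x. x $ i) Q)" by simp
      then have "y $ i \<in> {a i, mu i, b i}" using setL[of i] unfolding marg by blast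
      then show "a i \<le> y $ i \<and> y $ i \<le> b i" using assms(5,6)[of i] by auto
    qed
    then show ?thesis unfolding Pstar_def by (subst AE_distr_iff) auto
  qed
  have Pin: "Pstar \<in> ambig_set a mu b delta"
    unfolding ambig_set_def
  proof (intro CollectI conjI allI psP setsP)
    fix i
    show "integrable Pstar (\<lambda>x. x $ i)" using integP[of "\<lambda>t. t" i] by simp
    show "integrable Pstar (\<lambda>x. \<bar>x $ i - mu i\<bar>)" using integP[of "\<lambda>t. \<bar>t - mu i\<bar>" i] by simp
    show "AE x in Pstar. a i \<le> x $ i \<and> x $ i \<le> b i" by (rule AEP)
    have "(\<integral>x. x $ i \<partial>Pstar) = p1 i * a i + p2 i * mu i + p3 i * b i"
      using intP[of "\<lambda>t. t" i] by simp
    also have "\<dots> = mu i"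
    proof -
      have "p1 i * a i + p2 i * mu i + p3 i * b i = mu i - p1 i * (mu i - a i) + p3 i * (b i - mu i)"
        unfolding p2_def by (simp add: algebra_simps)
      also have "p1 i * (mu i - a i) = delta i / 2" unfolding p1_def using dist[of i] by (intro half_lem) auto
      also have "p3 i * (b i - mu i) = delta i / 2" unfolding p3_def using dist[of i] by (intro half_lem) auto
      finally show ?thesis by simp
    qed
    finally show "(\<integral>x. x $ i \<partial>Pstar) = mu i" .
    have "(\<integral>x. \<bar>x $ i - mu i\<bar> \<partial>Pstar) = p1 i * \<bar>a i - mu i\<bar> + p2 i * \<bar>mu i - mu i\<bar> + p3 i * \<bar>b i - mu i\<bar>"
      using intP[of "\<lambda>t. \<bar>t - mu i\<bar>" i] by simp
    also have "\<dots> = p1 i * (mu i - a i) + p3 i * (b i - mu i)"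
      using assms(5,6)[of i] by simp
    also have "p1 i * (mu i - a i) = delta i / 2" unfolding p1_def using dist[of i] by (intro half_lem) auto
    also have "p3 i * (b i - mu i) = delta i / 2" unfolding p3_def using dist[of i] by (intro half_lem) auto
    finally show "(\<integral>x. \<bar>x $ i - mu i\<bar> \<partial>Pstar) = delta i" by simp
  qed
  show ?thesis
  proof (rule bexI[OF _ Pin], intro conjI allI ballI)
    fix i
    show "measure Pstar {x. x $ i = a i} = delta i / (2 * (mu i - a i))"
      using measP pmfL p1_def by simp
    show "measure Pstar {x. x $ i = mu i} = 1 - delta i / (2 * (mu i - a i)) - delta i / (2 * (b i - mu i))"
      using measP pmfL p1_def p2_def p3_def by simp
    show "measure Pstar {x. x $ i = b i} = delta i / (2 * (b i - mu i))"
      using measP pmfL p3_def by simp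
  next
    fix P assume "P \<in> ambig_set a mu b delta"
    then have P: "prob_space P" "\<And>i. integrable P (\<lambda>x. x $ i)" "\<And>i. (\<integral>x. x $ i \<partial>P) = mu i"
      "\<And>i. integrable P (\<lambda>x. \<bar>x $ i - mu i\<bar>)" "\<And>i. (\<integral>x. \<bar>x $ i - mu i\<bar> \<partial>P) = delta i"
      "\<And>i. AE x in P. a i \<le> x $ i \<and> x $ i \<le> b i"
      unfolding ambig_set_def by auto
    from Pin have S: "prob_space Pstar" "\<And>i. integrable Pstar (\<lambda>x. x $ i)" "\<And>i. (\<integral>x. x $ i \<partial>Pstar) = mu i"
      unfolding ambig_set_def by auto
    have kP: "(\<integral>x. max (x $ i - q $ i) 0 \<partial>P) \<le> (\<integral>x. max (x $ i - q $ i) 0 \<partial>Pstar)" for i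
    proof -
      have "(\<integral>x. max (x $ i - q $ i) 0 \<partial>P) \<le> p1 i * max (a i - q $ i) 0 + p2 i * max (mu i - q $ i) 0
          + p3 i * max (b i - q $ i) 0"
        unfolding p2_def p1_def p3_def
        by (rule key[OF P(1) P(2) P(3) P(4) P(5) P(6) assms(5) assms(6)])
      also have "\<dots> = (\<integral>x. max (x $ i - q $ i) 0 \<partial>Pstar)"
        using intP[of "\<lambda>t. max (t - q $ i) 0" i] by simp
      finally show ?thesis .
    qed
    show "(\<integral>x. Gcost c m d q x \<partial>P) \<le> (\<integral>x. Gcost c m d q x \<partial>Pstar)"
      unfolding Gcost_integral(2)[OF P(1,2)] Gcost_integral(2)[OF S(1,2)] P(3) S(3)
    proof (rule sum_mono)
      fix i
      have "(m i + d i) * (\<integral>x. max (x $ i - q $ i) 0 \<partial>P) \<le> (m i + d i) * (\<integral>x. max (x $ i - q $ i) 0 \<partial>Pstar)"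
        using kP[of i] assms(2,3)[of i] by (intro mult_left_mono) auto
      then show "c i * (d i * (q $ i - mu i) + (m i + d i) * (\<integral>x. max (x $ i - q $ i) 0 \<partial>P))
          \<le> c i * (d i * (q $ i - mu i) + (m i + d i) * (\<integral>x. max (x $ i - q $ i) 0 \<partial>Pstar))"
        using assms(1)[of i] by (intro mult_left_mono) auto
    qed
  qed
qed

end
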